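(* Fix $1\leq p<\infty$ with $p\neq 2$ and set $c_p:=1-p/2$. Then $\|1+\varepsilon(z_1+z_2)+c_p\varepsilon^2z_1z_2\|_p<\|1+\varepsilon(z_1+z_2)\|_p$ for every sufficiently small $\varepsilon>0$, where $\|\cdot\|_p$ is the norm of $L^p(\mathbb{T}^2)$. Moreover, $\|1+z_1+z_2-z_1z_2\|_\infty<\|1+z_1+z_2\|_\infty$, with the norm of $L^\infty(\mathbb{T}^2)$.
   Context: $\mathbb{T}^2$ is the 2-dimensional torus with normalized Haar measure, and $(z_1,z_2)$ denote its coordinates. *)

theory Defs
  imports "HOL-Probability.Probability"
begin

definition T2_param :: "real \<times> real \<Rightarrow> complex \<times> complex" where
  "T2_param = (\<lambda>(s,t). (cis s, cis t))"

definition haar_T2 :: "(complex \<times> complex) measure" where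
  "haar_T2 = distr (uniform_measure lborel {0..2*pi} \<Otimes>\<^sub>M uniform_measure lborel {0..2*pi})
                   (borel \<Otimes>\<^sub>M borel) T2_param"

definition Lp_norm_T2 :: "real \<Rightarrow> (complex \<times> complex \<Rightarrow> complex) \<Rightarrow> real" where
  "Lp_norm_T2 p f = (\<integral>z. cmod (f z) powr p \<partial>haar_T2) powr (1/p)"

definition Linf_norm_T2 :: "(complex \<times> complex \<Rightarrow> complex) \<Rightarrow> ereal" where
  "Linf_norm_T2 f = esssup haar_T2 (\<lambda>z. ereal (cmod (f z)))"

end

theory Submission
  imports Defs
begin

lemma powr_bound14:
  fixes t s :: real assumes "1/4 \<le> t" "t \<le> 2"
  shows "t powr s \<le> 4 powr \<bar>s\<bar>"
proof -
  have tp: "t > 0" using assms by simp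
  have l1: "ln t \<le> ln 4" using assms by simp
  have l2: "- ln 4 \<le> ln t"
  proof -
    have "ln (1/4) \<le> ln t" using assms by simp
    moreover have "ln (1/4::real) = - ln 4" by (simp add: ln_div)
    ultimately show ?thesis by simp
  qed
  have "\<bar>ln t\<bar> \<le> ln 4" using l1 l2 by simp
  have "s * ln t \<le> \<bar>s\<bar> * ln 4"
  proof -
    have "s * ln t \<le> \<bar>s * ln t\<bar>" by simp
    also have "\<dots> = \<bar>s\<bar> * \<bar>ln t\<bar>" by (simp add: abs_mult)
    also have "\<dots> \<le> \<bar>s\<bar> * ln 4" using \<open>\<bar>ln t\<bar> \<le> ln 4\<close> by (simp add: mult_left_mono)
    finally show ?thesis .
  qed
  then show ?thesis using tp by (simp add: powr_def)
qed

definition dpow :: "real \<Rightarrow> nat \<Rightarrow> real \<Rightarrow> real" where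
  "dpow r m t = (\<Prod>i<m. r - real i) * t powr (r - real m)"

lemma dpow_deriv: "t > 0 \<Longrightarrow> DERIV (dpow r m) t :> dpow r (Suc m) t"
proof -
  assume t: "t > 0"
  have "DERIV (\<lambda>t. (\<Prod>i<m. r - real i) * t powr (r - real m)) t :> (\<Prod>i<m. r - real i) * ((r - real m) * t powr (r - real m - 1))"
    by (rule DERIV_cmult, rule has_real_derivative_powr[OF t])
  moreover have "(\<Prod>i<m. r - real i) * ((r - real m) * t powr (r - real m - 1)) = dpow r (Suc m) t"
    unfolding dpow_def by (simp add: algebra_simps)
  ultimately show ?thesis unfolding dpow_def by simp
qed

lemma GT:
  fixes r :: real and n :: nat
  assumes n: "n > 0"
  shows "\<exists>K\<ge>0. \<forall>c x. 1/4 \<le> c \<longrightarrow> c \<le> 2 \<longrightarrow> 1/4 \<le> x \<longrightarrow> x \<le> 2 \<longrightarrow>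
     \<bar>x powr r - (\<Sum>m<n. dpow r m c / fact m * (x - c)^m)\<bar> \<le> K * \<bar>x - c\<bar>^n"
proof -
  define K where "K = \<bar>\<Prod>i<n. r - real i\<bar> / fact n * 4 powr \<bar>r - real n\<bar>"
  have K0: "K \<ge> 0" unfolding K_def by simp
  have "\<bar>x powr r - (\<Sum>m<n. dpow r m c / fact m * (x - c)^m)\<bar> \<le> K * \<bar>x - c\<bar>^n"
    if c: "1/4 \<le> c" "c \<le> 2" and x: "1/4 \<le> x" "x \<le> 2" for c x
  proof (cases "x = c")
    case True
    obtain k where k: "n = Suc k" using n by (cases n) auto
    show ?thesis unfolding k True sum.lessThan_Suc_shift by (simp add: dpow_def)
  next
    case False
    have "\<exists>t. (if x < c then (x < t \<and> t < c) else (c < t \<and> t < x)) \<and>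
       (\<lambda>x. x powr r) x = (\<Sum>m<n. dpow r m c / fact m * (x - c)^m) + dpow r n t / fact n * (x - c)^n"
      apply (rule Taylor[where a="1/4" and b=2 and diff="\<lambda>m. dpow r m"])
      using n c x False apply (auto simp: intro!: dpow_deriv)
      apply (auto simp: dpow_def fun_eq_iff)
      done
    then obtain t where t: "(if x < c then (x < t \<and> t < c) else (c < t \<and> t < x))"
      and eq: "x powr r = (\<Sum>m<n. dpow r m c / fact m * (x - c)^m) + dpow r n t / fact n * (x - c)^n"
      by auto
    have tb: "1/4 \<le> t" "t \<le> 2" using t c x by (auto split: if_splits)
    have "\<bar>x powr r - (\<Sum>m<n. dpow r m c / fact m * (x - c)^m)\<bar> = \<bar>dpow r n t / fact n * (x - c)^n\<bar>"
      using eq by simp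
    also have "\<dots> = \<bar>\<Prod>i<n. r - real i\<bar> / fact n * t powr (r - real n) * \<bar>x - c\<bar>^n"
      using tb by (simp add: dpow_def abs_mult power_abs)
    also have "\<dots> \<le> K * \<bar>x - c\<bar>^n"
      unfolding K_def
      by (intro mult_right_mono mult_left_mono powr_bound14 tb) auto
    finally show ?thesis .
  qed
  then show ?thesis using K0 by blast
qed

lemma GT3:
  fixes r :: real
  shows "\<exists>K\<ge>0. \<forall>c x. 1/4 \<le> c \<longrightarrow> c \<le> 2 \<longrightarrow> 1/4 \<le> x \<longrightarrow> x \<le> 2 \<longrightarrow>
     \<bar>x powr r - (c powr r + r * c powr (r - 1) * (x - c) + r * (r - 1) / 2 * c powr (r - 2) * (x - c)^2)\<bar> \<le> K * \<bar>x - c\<bar>^3"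
proof -
  obtain K where K: "K \<ge> 0" "\<forall>c x. 1/4 \<le> c \<longrightarrow> c \<le> 2 \<longrightarrow> 1/4 \<le> x \<longrightarrow> x \<le> 2 \<longrightarrow>
     \<bar>x powr r - (\<Sum>m<3. dpow r m c / fact m * (x - c)^m)\<bar> \<le> K * \<bar>x - c\<bar>^3"
    using GT[of 3 r] by auto
  have eqs: "(\<Sum>m<3. dpow r m c / fact m * (x - c)^m) = c powr r + r * c powr (r - 1) * (x - c) + r * (r - 1) / 2 * c powr (r - 2) * (x - c)^2" for c x
    by (simp add: dpow_def eval_nat_numeral lessThan_Suc)
  show ?thesis using K(1) K(2)[unfolded eqs] by blast
qed

lemma GT1:
  fixes r :: real
  shows "\<exists>K\<ge>0. \<forall>c x. 1/4 \<le> c \<longrightarrow> c \<le> 2 \<longrightarrow> 1/4 \<le> x \<longrightarrow> x \<le> 2 \<longrightarrow>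
     \<bar>x powr r - c powr r\<bar> \<le> K * \<bar>x - c\<bar>"
proof -
  obtain K where K: "K \<ge> 0" "\<forall>c x. 1/4 \<le> c \<longrightarrow> c \<le> 2 \<longrightarrow> 1/4 \<le> x \<longrightarrow> x \<le> 2 \<longrightarrow>
     \<bar>x powr r - (\<Sum>m<1. dpow r m c / fact m * (x - c)^m)\<bar> \<le> K * \<bar>x - c\<bar>^1"
    using GT[of 1 r] by auto
  have eqs: "(\<Sum>m<1. dpow r m c / fact m * (x - c)^m) = c powr r" for c x
    by (simp add: dpow_def)
  show ?thesis using K(1) K(2)[unfolded eqs power_one_right] by blast
qed

definition Rem :: "real \<Rightarrow> real \<Rightarrow> real \<Rightarrow> real \<Rightarrow> real \<Rightarrow> real \<Rightarrow> real" where
  "Rem q c e a b n = q*(q-1)*(2*c^2*a + 2*c*n*a + c^2*e*n)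
     + q*(q-1)*(q-2)/2*(4*a^2*(2*c*a + c^2*e) + (4*a*n + e*n^2)*(2*c*b + 2*c*e*a + c^2*e^2))
     + q*(q-1)/2*(2*c*a + c^2*e)*(4*c*b + 2*c*e*a + c^2*e^2)"

definition Main4 :: "real \<Rightarrow> real \<Rightarrow> real \<Rightarrow> real \<Rightarrow> real \<Rightarrow> real \<Rightarrow> real" where
  "Main4 q c e a b n = 2*c*q*e^2*b + 2*c*q*e^3*a + q*c^2*e^4 + 4*c*q*(q-1)*e^3*a*b
     + 4*c*q*(q-1)*e^4*a^2 + 2*c*q*(q-1)*e^4*n*b + 4*c*q*(q-1)*(q-2)*e^4*a^2*b
     + 2*q*(q-1)*c^2*e^4*b^2"

lemma P_eq0:
  fixes q c e a b n :: real
  shows "(q*(1 + (q-1)*(2*e*a + e^2*n) + (q-1)*(q-2)/2*(2*e*a + e^2*n)^2)*(2*c*e^2*(b + e*a) + c^2*e^4) + q*(q-1)/2*(2*c*e^2*(b + e*a) + c^2*e^4)^2) = (2*c*q*e^2*b + 2*c*q*e^3*a + q*c^2*e^4 + 4*c*q*(q-1)*e^3*a*b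
     + 4*c*q*(q-1)*e^4*a^2 + 2*c*q*(q-1)*e^4*n*b + 4*c*q*(q-1)*(q-2)*e^4*a^2*b
     + 2*q*(q-1)*c^2*e^4*b^2) + e^5 * (q*(q-1)*(2*c^2*a + 2*c*n*a + c^2*e*n)
     + q*(q-1)*(q-2)/2*(4*a^2*(2*c*a + c^2*e) + (4*a*n + e*n^2)*(2*c*b + 2*c*e*a + c^2*e^2))
     + q*(q-1)/2*(2*c*a + c^2*e)*(4*c*b + 2*c*e*a + c^2*e^2))"
proof -
  have eq2: "2*(q*(1 + (q-1)*(2*e*a + e^2*n) + (q-1)*(q-2)/2*(2*e*a + e^2*n)^2)*(2*c*e^2*(b + e*a) + c^2*e^4) + q*(q-1)/2*(2*c*e^2*(b + e*a) + c^2*e^4)^2) = 2*((2*c*q*e^2*b + 2*c*q*e^3*a + q*c^2*e^4 + 4*c*q*(q-1)*e^3*a*b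
     + 4*c*q*(q-1)*e^4*a^2 + 2*c*q*(q-1)*e^4*n*b + 4*c*q*(q-1)*(q-2)*e^4*a^2*b
     + 2*q*(q-1)*c^2*e^4*b^2) + e^5 * (q*(q-1)*(2*c^2*a + 2*c*n*a + c^2*e*n)
     + q*(q-1)*(q-2)/2*(4*a^2*(2*c*a + c^2*e) + (4*a*n + e*n^2)*(2*c*b + 2*c*e*a + c^2*e^2))
     + q*(q-1)/2*(2*c*a + c^2*e)*(4*c*b + 2*c*e*a + c^2*e^2)))"
    by (simp add: field_simps) (simp add: algebra_simps eval_nat_numeral)
  show ?thesis by (rule mult_left_cancel[THEN iffD1, OF _ eq2]) simp
qed

lemma P_eq:
  fixes q c e a b n :: real
  shows "(q*(1 + (q-1)*(2*e*a + e^2*n) + (q-1)*(q-2)/2*(2*e*a + e^2*n)^2)*(2*c*e^2*(b + e*a) + c^2*e^4) + q*(q-1)/2*(2*c*e^2*(b + e*a) + c^2*e^4)^2) = Main4 q c e a b n + e^5 * Rem q c e a b n"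
  unfolding Main4_def Rem_def by (rule P_eq0)

lemma Rem_bound:
  "\<exists>B. \<forall>e a b n. 0 \<le> e \<longrightarrow> e \<le> 1 \<longrightarrow> \<bar>a\<bar> \<le> 2 \<longrightarrow> \<bar>b\<bar> \<le> 1 \<longrightarrow> \<bar>n\<bar> \<le> 4 \<longrightarrow> \<bar>Rem q c e a b n\<bar> \<le> B"
proof -
  define S :: "(real \<times> real \<times> real \<times> real) set" where "S = {0..1} \<times> {-2..2} \<times> {-1..1} \<times> {-4..4}"
  define f where "f = (\<lambda>(x::real \<times> real \<times> real \<times> real). Rem q c (fst x) (fst (snd x)) (fst (snd (snd x))) (snd (snd (snd x))))"
  have "compact S" unfolding S_def by (intro compact_Times compact_Icc)
  moreover have "continuous_on S f" unfolding f_def Rem_def by (intro continuous_on_add continuous_on_mult continuous_on_divide continuous_on_diff continuous_on_power continuous_on_fst continuous_on_snd continuous_on_const continuous_on_id) auto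
  ultimately have "compact (f ` S)" by (rule compact_continuous_image[rotated])
  then have "bounded (f ` S)" by (rule compact_imp_bounded)
  then obtain B where B: "\<forall>y\<in>f ` S. norm y \<le> B" by (auto simp: bounded_iff)
  have "\<bar>Rem q c e a b n\<bar> \<le> B" if "0 \<le> e" "e \<le> 1" "\<bar>a\<bar> \<le> 2" "\<bar>b\<bar> \<le> 1" "\<bar>n\<bar> \<le> 4" for e a b n
  proof -
    have "(e,a,b,n) \<in> S" using that unfolding S_def by auto
    then have "norm (f (e,a,b,n)) \<le> B" using B by blast
    then show ?thesis by (simp add: f_def)
  qed
  then show ?thesis by blast
qed

lemma PW:
  fixes q c :: real
  shows "\<exists>K e1. 0 < e1 \<and> (\<forall>e a b n. 0 < e \<longrightarrow> e \<le> e1 \<longrightarrow> \<bar>a\<bar> \<le> 2 \<longrightarrow> \<bar>b\<bar> \<le> 1 \<longrightarrow> \<bar>n\<bar> \<le> 4 \<longrightarrow>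
     (1 + 2*e*a + e^2*n + (2*c*e^2*(b + e*a) + c^2*e^4)) powr q - (1 + 2*e*a + e^2*n) powr q
       \<le> Main4 q c e a b n + K * e^5)"
proof -
  obtain K1 where K1: "K1 \<ge> 0" "\<forall>c x. 1/4 \<le> c \<longrightarrow> c \<le> 2 \<longrightarrow> 1/4 \<le> x \<longrightarrow> x \<le> 2 \<longrightarrow>
     \<bar>x powr q - (c powr q + q * c powr (q - 1) * (x - c) + q * (q - 1) / 2 * c powr (q - 2) * (x - c)^2)\<bar> \<le> K1 * \<bar>x - c\<bar>^3"
    using GT3[of q] by blast
  obtain K2 where K2: "K2 \<ge> 0" "\<forall>c x. 1/4 \<le> c \<longrightarrow> c \<le> 2 \<longrightarrow> 1/4 \<le> x \<longrightarrow> x \<le> 2 \<longrightarrow>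
     \<bar>x powr (q-1) - (c powr (q-1) + (q-1) * c powr (q - 1 - 1) * (x - c) + (q-1) * (q - 1 - 1) / 2 * c powr (q - 1 - 2) * (x - c)^2)\<bar> \<le> K2 * \<bar>x - c\<bar>^3"
    using GT3[of "q-1"] by blast
  obtain K3 where K3: "K3 \<ge> 0" "\<forall>c x. 1/4 \<le> c \<longrightarrow> c \<le> 2 \<longrightarrow> 1/4 \<le> x \<longrightarrow> x \<le> 2 \<longrightarrow>
     \<bar>x powr (q-2) - c powr (q-2)\<bar> \<le> K3 * \<bar>x - c\<bar>"
    using GT1[of "q-2"] by blast
  obtain B where B: "\<forall>e a b n. 0 \<le> e \<longrightarrow> e \<le> 1 \<longrightarrow> \<bar>a\<bar> \<le> 2 \<longrightarrow> \<bar>b\<bar> \<le> 1 \<longrightarrow> \<bar>n\<bar> \<le> 4 \<longrightarrow> \<bar>Rem q c e a b n\<bar> \<le> B"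
    using Rem_bound[of q c] by blast
  define Hb where "Hb = 6*\<bar>c\<bar> + c^2 + 1"
  have Hb1: "Hb \<ge> 1" unfolding Hb_def by simp
  define e1 where "e1 = min (1/16) (1/(4*Hb))"
  have e1p: "e1 > 0" unfolding e1_def using Hb1 by simp
  define K where "K = 512*\<bar>q\<bar>*K2*Hb + 4*\<bar>q*(q-1)\<bar>*K3*Hb^2 + K1*Hb^3 + B"
  have main: "(1 + 2*e*a + e^2*n + (2*c*e^2*(b + e*a) + c^2*e^4)) powr q - (1 + 2*e*a + e^2*n) powr q
       \<le> Main4 q c e a b n + K * e^5"
    if e: "0 < e" "e \<le> e1" and a: "\<bar>a\<bar> \<le> 2" and b: "\<bar>b\<bar> \<le> 1" and n: "\<bar>n\<bar> \<le> 4" for e a b n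
  proof -
    have e16: "e \<le> 1/16" using e unfolding e1_def by simp
    have eHb: "e * Hb \<le> 1/4"
    proof -
      have "e \<le> 1/(4*Hb)" using e unfolding e1_def by simp
      then show ?thesis using Hb1 by (simp add: field_simps)
    qed
    define D where "D = 2*e*a + e^2*n"
    define H where "H = 2*c*(b + e*a) + c^2*e^2"
    define h where "h = e^2 * H"
    have h_eq: "2*c*e^2*(b + e*a) + c^2*e^4 = h" unfolding h_def H_def by (simp add: algebra_simps eval_nat_numeral)
    have ee: "e^2 \<le> e" using e e16 by (simp add: power2_eq_square mult_le_cancel_left1)
    have Db: "\<bar>D\<bar> \<le> 8*e"
    proof -
      have "\<bar>D\<bar> \<le> \<bar>2*e*a\<bar> + \<bar>e^2*n\<bar>" unfolding D_def by (rule abs_triangle_ineq)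
      moreover have "\<bar>2*e*a\<bar> \<le> 2*e*2"
      proof -
        have "\<bar>2*e*a\<bar> = 2*e*\<bar>a\<bar>" using e by (simp add: abs_mult)
        also have "\<dots> \<le> 2*e*2" using a e by (intro mult_left_mono) auto
        finally show ?thesis .
      qed
      moreover have "\<bar>e^2*n\<bar> \<le> e*4"
      proof -
        have "\<bar>e^2*n\<bar> = e^2*\<bar>n\<bar>" by (simp add: abs_mult)
        also have "\<dots> \<le> e*4" using n ee e by (intro mult_mono) auto
        finally show ?thesis .
      qed
      ultimately show ?thesis by linarith
    qed
    have Hbd: "\<bar>H\<bar> \<le> Hb"
    proof -
      have "\<bar>e*a\<bar> \<le> 1*2" using a e e16 unfolding abs_mult by (intro mult_mono) auto
      then have "\<bar>b + e*a\<bar> \<le> 3" using b by linarith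
      then have "\<bar>c\<bar> * \<bar>b + e*a\<bar> \<le> \<bar>c\<bar> * 3" by (intro mult_left_mono) auto
      then have "\<bar>2*c*(b + e*a)\<bar> \<le> 6*\<bar>c\<bar>" by (simp add: abs_mult)
      moreover have "\<bar>c^2*e^2\<bar> \<le> c^2"
      proof -
        have "e^2 \<le> 1" using ee e16 by simp
        then have "c^2*e^2 \<le> c^2" by (rule mult_left_le) auto
        then show ?thesis by (simp add: abs_mult)
      qed
      ultimately show ?thesis unfolding H_def Hb_def by linarith
    qed
    have hb: "\<bar>h\<bar> \<le> Hb * e^2"
    proof -
      have "\<bar>h\<bar> = \<bar>H\<bar> * e^2" by (simp add: h_def abs_mult)
      also have "\<dots> \<le> Hb * e^2" using Hbd by (rule mult_right_mono) simp
      finally show ?thesis .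
    qed
    have hs: "\<bar>h\<bar> \<le> 1/4"
    proof -
      have "Hb * e^2 \<le> Hb * e" using ee Hb1 by simp
      then show ?thesis using hb eHb by (simp add: mult.commute)
    qed
    have Ds: "\<bar>D\<bar> \<le> 1/2" using Db e16 by simp
    define X0 where "X0 = 1 + D"
    have X0b: "1/4 \<le> X0" "X0 \<le> 2" "1/4 \<le> X0 + h" "X0 + h \<le> 2" unfolding X0_def using Ds hs by auto
    have T1: "\<bar>(X0 + h) powr q - (X0 powr q + q * X0 powr (q - 1) * h + q * (q - 1) / 2 * X0 powr (q - 2) * h^2)\<bar> \<le> K1 * \<bar>h\<bar>^3"
      using K1(2)[rule_format, of X0 "X0+h"] X0b by simp
    define T2 where "T2 = 1 + (q-1)*D + (q-1)*(q-2)/2*D^2"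
    define R1 where "R1 = X0 powr (q-1) - T2"
    define R2 where "R2 = X0 powr (q-2) - 1"
    have R1b: "\<bar>R1\<bar> \<le> K2 * \<bar>D\<bar>^3"
      using K2(2)[rule_format, of 1 X0] X0b unfolding R1_def T2_def X0_def by (simp add: algebra_simps)
    have R2b: "\<bar>R2\<bar> \<le> K3 * \<bar>D\<bar>"
      using K3(2)[rule_format, of 1 X0] X0b unfolding R2_def X0_def by simp
    have Peq: "q*T2*h + q*(q-1)/2*h^2 = Main4 q c e a b n + e^5 * Rem q c e a b n"
      using P_eq[of q e a n c b] unfolding T2_def D_def h_eq[symmetric] by simp
    have step1: "(X0 + h) powr q - X0 powr q \<le> q * X0 powr (q - 1) * h + q * (q - 1) / 2 * X0 powr (q - 2) * h^2 + K1 * \<bar>h\<bar>^3"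
      using abs_le_D1[OF T1] by linarith
    have idt0: "q * X0 powr (q - 1) * h + w * X0 powr (q - 2) * h^2
       = (q*T2*h + w*h^2) + q*R1*h + w*R2*h^2" for w
      unfolding R1_def R2_def by (simp add: algebra_simps)
    have idt: "q * X0 powr (q - 1) * h + q * (q - 1) / 2 * X0 powr (q - 2) * h^2
       = (q*T2*h + q*(q-1)/2*h^2) + q*R1*h + q*(q-1)/2*R2*h^2"
      by (rule idt0)
    have b1: "q*R1*h \<le> 512*\<bar>q\<bar>*K2*Hb * e^5"
    proof -
      have "q*R1*h \<le> \<bar>q\<bar>*\<bar>R1\<bar>*\<bar>h\<bar>" by (simp add: abs_mult[symmetric])
      also have "\<dots> \<le> \<bar>q\<bar>*(K2*(8*e)^3)*(Hb*e^2)"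
      proof (intro mult_mono mult_left_mono)
        have "\<bar>D\<bar>^3 \<le> (8*e)^3" by (rule power_mono[OF Db]) simp
        then have "K2*\<bar>D\<bar>^3 \<le> K2*(8*e)^3" using K2(1) by (rule mult_left_mono)
        then show "\<bar>R1\<bar> \<le> K2*(8*e)^3" using R1b by linarith
      qed (use hb K2(1) e in auto)
      also have "\<dots> = 512*\<bar>q\<bar>*K2*Hb * e^5" by (simp add: algebra_simps eval_nat_numeral)
      finally show ?thesis .
    qed
    have b2: "q*(q-1)/2*R2*h^2 \<le> 4*\<bar>q*(q-1)\<bar>*K3*Hb^2 * e^5"
    proof -
      have "q*(q-1)/2*R2*h^2 \<le> \<bar>q*(q-1)/2*R2*h^2\<bar>" by (rule abs_ge_self)
      also have "\<dots> = \<bar>q*(q-1)\<bar>/2*\<bar>R2\<bar>*\<bar>h\<bar>^2" by (simp add: abs_mult power_abs)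
      also have "\<dots> \<le> \<bar>q*(q-1)\<bar>/2*(K3*(8*e))*(Hb*e^2)^2"
      proof (intro mult_mono mult_left_mono power_mono)
        have "K3*\<bar>D\<bar> \<le> K3*(8*e)" using Db K3(1) by (rule mult_left_mono)
        then show "\<bar>R2\<bar> \<le> K3*(8*e)" using R2b by linarith
      qed (use hb K3(1) e in auto)
      also have "\<dots> = 4*\<bar>q*(q-1)\<bar>*K3*Hb^2 * e^5" by (simp add: algebra_simps eval_nat_numeral)
      finally show ?thesis .
    qed
    have b3: "K1 * \<bar>h\<bar>^3 \<le> K1*Hb^3 * e^5"
    proof -
      have "K1 * \<bar>h\<bar>^3 \<le> K1 * (Hb*e^2)^3" using hb K1(1) by (intro mult_left_mono power_mono) auto
      also have "\<dots> = K1*Hb^3*e^5*e" by (simp add: algebra_simps eval_nat_numeral)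
      also have "\<dots> \<le> K1*Hb^3*e^5" using e e16 K1(1) Hb1 by (intro mult_left_le) auto
      finally show ?thesis .
    qed
    have b4: "e^5 * Rem q c e a b n \<le> B * e^5"
    proof -
      have "Rem q c e a b n \<le> B" using B[rule_format, of e a b n] e e16 a b n by auto
      then show ?thesis using e by (simp add: mult.commute mult_right_mono)
    qed
    have "(X0 + h) powr q - X0 powr q \<le> ((q*T2*h + q*(q-1)/2*h^2) + q*R1*h + q*(q-1)/2*R2*h^2) + K1 * \<bar>h\<bar>^3"
      using step1 by (simp only: idt)
    also have "\<dots> = ((Main4 q c e a b n + e^5 * Rem q c e a b n) + q*R1*h + q*(q-1)/2*R2*h^2) + K1 * \<bar>h\<bar>^3"
      by (simp only: Peq)
    also have "\<dots> \<le> ((Main4 q c e a b n + B * e^5) + 512*\<bar>q\<bar>*K2*Hb * e^5 + 4*\<bar>q*(q-1)\<bar>*K3*Hb^2 * e^5) + K1*Hb^3 * e^5"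
      by (intro add_mono add_left_mono b1 b2 b3 b4)
    also have "\<dots> = Main4 q c e a b n + K * e^5"
      unfolding K_def by (simp add: algebra_simps)
    finally have "(X0 + h) powr q - X0 powr q \<le> Main4 q c e a b n + K * e^5" .
    then show ?thesis unfolding X0_def D_def h_eq by (simp add: add.assoc)
  qed
  show ?thesis
    apply (rule exI[of _ K], rule exI[of _ e1])
    apply (rule conjI[OF e1p])
    apply (intro allI impI)
    apply (rule main)
        apply assumption+
    done
qed


abbreviation "BX \<equiv> cbox (0::real,0::real) (2*pi,2*pi)"

lemma SEP:
  fixes f g :: "real \<Rightarrow> real"
  assumes f: "continuous_on UNIV f" and g: "continuous_on UNIV g"
  shows "((\<lambda>x. f (fst x) * g (snd x)) has_integral (integral {0..2*pi} f * integral {0..2*pi} g)) BX"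
proof -
  have c: "continuous_on BX (\<lambda>x. f (fst x) * g (snd x))"
    by (intro continuous_intros continuous_on_compose2[OF f] continuous_on_compose2[OF g]) auto
  have "integral BX (\<lambda>x. f (fst x) * g (snd x)) = integral (cbox 0 (2*pi)) (\<lambda>s. integral (cbox 0 (2*pi)) (\<lambda>t. f s * g t))"
    using integral_prod_continuous[OF c] by simp
  also have "\<dots> = integral {0..2*pi} f * integral {0..2*pi} g"
    by (simp add: integral_mult_left integral_mult_right)
  finally show ?thesis using integrable_continuous[OF c] by (metis integrable_integral)
qed

lemma FTC0:
  fixes F f :: "real \<Rightarrow> real"
  assumes "\<And>x. (F has_real_derivative f x) (at x)"
  shows "(f has_integral (F (2*pi) - F 0)) {0..2*pi}"
  by (rule fundamental_theorem_of_calculus) 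
     (auto simp: has_real_derivative_iff_has_vector_derivative[symmetric] intro: has_field_derivative_at_within assms)

lemma I_cos: "(cos has_integral 0) {0..2*pi}"
  using FTC0[of sin cos] by (auto intro: derivative_eq_intros)
lemma I_sin: "(sin has_integral 0) {0..2*pi}"
proof -
  have "((\<lambda>x. - cos x) has_real_derivative sin x) (at x)" for x
    by (rule derivative_eq_intros refl | simp)+
  from FTC0[OF this] show ?thesis by simp
qed
lemma I_one: "((\<lambda>x. 1) has_integral 2*pi) {0..2*pi}"
  using FTC0[of "\<lambda>x. x" "\<lambda>x. 1"] by (auto intro!: derivative_eq_intros)
lemma I_cos2: "((\<lambda>x. cos x ^ 2) has_integral pi) {0..2*pi}"
proof -
  have "((\<lambda>x. x/2 + sin(2*x)/4) has_real_derivative cos x ^ 2) (at x)" for x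
    by (rule derivative_eq_intros refl | simp)+ (insert cos_double_cos[of x], simp add: field_simps)
  from FTC0[OF this] show ?thesis by simp
qed
lemma I_sin2: "((\<lambda>x. sin x ^ 2) has_integral pi) {0..2*pi}"
proof -
  have "((\<lambda>x. x/2 - sin(2*x)/4) has_real_derivative sin x ^ 2) (at x)" for x
    by (rule derivative_eq_intros refl | simp)+ (insert cos_double_sin[of x], simp add: field_simps)
  from FTC0[OF this] show ?thesis by simp
qed
lemma I_cs: "((\<lambda>x. cos x * sin x) has_integral 0) {0..2*pi}"
proof -
  have "((\<lambda>x. sin x ^ 2 / 2) has_real_derivative cos x * sin x) (at x)" for x
    by (rule derivative_eq_intros refl | simp)+
  from FTC0[OF this] show ?thesis by simp
qed

lemma SEPc:
  fixes f g :: "real \<Rightarrow> real"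
  assumes "continuous_on UNIV f" "continuous_on UNIV g"
    and "(f has_integral I) {0..2*pi}" "(g has_integral J) {0..2*pi}"
  shows "((\<lambda>x. f (fst x) * g (snd x)) has_integral I * J) BX"
  using SEP[OF assms(1,2)] assms(3,4) by (simp add: integral_unique)

lemma Iany:
  fixes f :: "real \<Rightarrow> real"
  assumes "continuous_on UNIV f"
  shows "(f has_integral integral {0..2*pi} f) {0..2*pi}"
  using assms by (intro integrable_integral integrable_continuous_interval) (auto intro: continuous_on_subset)

lemma HI_eq: "(f has_integral I) S \<Longrightarrow> (\<And>x. f x = g x) \<Longrightarrow> I = J \<Longrightarrow> (g has_integral J) S"
proof -
  assume "(f has_integral I) S" "\<And>x. f x = g x" "I = J"
  moreover have "f = g" using \<open>\<And>x. f x = g x\<close> by (rule ext)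
  ultimately show ?thesis by simp
qed

definition ca :: "real \<times> real \<Rightarrow> real" where "ca x = cos (fst x) + cos (snd x)"
definition cb :: "real \<times> real \<Rightarrow> real" where "cb x = cos (fst x) * cos (snd x) - sin (fst x) * sin (snd x)"
definition cn :: "real \<times> real \<Rightarrow> real" where "cn x = 2 + 2*(cos (fst x) * cos (snd x) + sin (fst x) * sin (snd x))"

lemma cU: "continuous_on UNIV (\<lambda>x::real. 1::real)" "continuous_on UNIV (cos::real\<Rightarrow>real)" "continuous_on UNIV (sin::real\<Rightarrow>real)"
  "continuous_on UNIV (\<lambda>x::real. cos x ^ 2)" "continuous_on UNIV (\<lambda>x::real. sin x ^ 2)"
  "continuous_on UNIV (\<lambda>x::real. cos x * sin x)" "continuous_on UNIV (\<lambda>x::real. cos x ^ 3)"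
  "continuous_on UNIV (\<lambda>x::real. cos x ^ 2 * sin x)"
  by (intro continuous_intros)+

lemma L_b: "(cb has_integral 0) BX"
proof -
  have "((\<lambda>x. cos (fst x) * cos (snd x) - sin (fst x) * sin (snd x)) has_integral (0*0 - 0*0)) BX"
    by (intro has_integral_diff SEPc cU I_cos I_sin)
  then show ?thesis unfolding cb_def[abs_def] by simp
qed

lemma L_a: "(ca has_integral 0) BX"
proof -
  have "((\<lambda>x. cos (fst x) * 1 + 1 * cos (snd x)) has_integral (0*(2*pi) + (2*pi)*0)) BX"
    by (intro has_integral_add SEPc[where f=cos and g="\<lambda>x. 1"] SEPc[where g=cos and f="\<lambda>x. 1"] cU I_cos I_one)
  then show ?thesis unfolding ca_def[abs_def] by simp
qed

lemma L_1: "((\<lambda>x. 1) has_integral (4*pi^2)) BX"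
proof -
  have "((\<lambda>x. 1 * 1) has_integral ((2*pi)*(2*pi))) BX"
    by (intro SEPc[where g="\<lambda>x. 1" and f="\<lambda>x. 1"] cU I_one)
  then show ?thesis by (simp add: power2_eq_square)
qed

lemma L_ab: "((\<lambda>x. ca x * cb x) has_integral 0) BX"
proof -
  have "((\<lambda>x. cos (fst x) ^ 2 * cos (snd x) - (cos (fst x) * sin (fst x)) * sin (snd x)
          + cos (fst x) * cos (snd x) ^ 2 - sin (fst x) * (cos (snd x) * sin (snd x)))
        has_integral (pi * 0 - 0 * 0 + 0 * pi - 0 * 0)) BX"
    by (intro has_integral_add has_integral_diff
        SEPc[where f="\<lambda>x. cos x ^ 2" and g=cos] SEPc[where f="\<lambda>x. cos x * sin x" and g=sin]
        SEPc[where g="\<lambda>x. cos x ^ 2" and f=cos] SEPc[where g="\<lambda>x. cos x * sin x" and f=sin]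
        cU I_cos I_sin I_cos2 I_cs)
  then show ?thesis unfolding ca_def cb_def
    by (rule HI_eq) (simp_all add: algebra_simps power2_eq_square)
qed

lemma L_a2: "((\<lambda>x. ca x ^ 2) has_integral (4*pi^2)) BX"
proof -
  have "((\<lambda>x. cos (fst x) ^ 2 * 1 + 2 * (cos (fst x) * cos (snd x)) + 1 * cos (snd x) ^ 2)
        has_integral (pi * (2*pi) + 2 * (0 * 0) + (2*pi) * pi)) BX"
    by (intro has_integral_add has_integral_mult_right
        SEPc[where f="\<lambda>x. cos x ^ 2" and g="\<lambda>x. 1"] SEPc[where f=cos and g=cos]
        SEPc[where g="\<lambda>x. cos x ^ 2" and f="\<lambda>x. 1"]
        cU I_cos I_one I_cos2)
  then show ?thesis unfolding ca_def
    by (rule HI_eq) (simp_all add: algebra_simps power2_eq_square)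
qed

lemma L_nb: "((\<lambda>x. cn x * cb x) has_integral 0) BX"
proof -
  have "((\<lambda>x. 2 * (cos (fst x) * cos (snd x)) - 2 * (sin (fst x) * sin (snd x))
          + 2 * (cos (fst x) ^ 2 * cos (snd x) ^ 2) - 2 * (sin (fst x) ^ 2 * sin (snd x) ^ 2))
        has_integral (2 * (0 * 0) - 2 * (0 * 0) + 2 * (pi * pi) - 2 * (pi * pi))) BX"
    by (intro has_integral_add has_integral_diff has_integral_mult_right
        SEPc[where f=cos and g=cos] SEPc[where f=sin and g=sin]
        SEPc[where f="\<lambda>x. cos x ^ 2" and g="\<lambda>x. cos x ^ 2"] SEPc[where f="\<lambda>x. sin x ^ 2" and g="\<lambda>x. sin x ^ 2"]
        cU I_cos I_sin I_cos2 I_sin2)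
  then show ?thesis unfolding cn_def cb_def
    by (rule HI_eq) (simp_all add: algebra_simps power2_eq_square)
qed

lemma L_b2: "((\<lambda>x. cb x ^ 2) has_integral (2*pi^2)) BX"
proof -
  have "((\<lambda>x. cos (fst x) ^ 2 * cos (snd x) ^ 2 - 2 * ((cos (fst x) * sin (fst x)) * (cos (snd x) * sin (snd x)))
          + sin (fst x) ^ 2 * sin (snd x) ^ 2)
        has_integral (pi * pi - 2 * (0 * 0) + pi * pi)) BX"
    by (intro has_integral_add has_integral_diff has_integral_mult_right
        SEPc[where f="\<lambda>x. cos x * sin x" and g="\<lambda>x. cos x * sin x"]
        SEPc[where f="\<lambda>x. cos x ^ 2" and g="\<lambda>x. cos x ^ 2"] SEPc[where f="\<lambda>x. sin x ^ 2" and g="\<lambda>x. sin x ^ 2"]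
        cU I_cs I_cos2 I_sin2)
  then show ?thesis unfolding cb_def
    by (rule HI_eq) (simp_all add: algebra_simps power2_eq_square)
qed

lemma L_a2b: "((\<lambda>x. ca x ^ 2 * cb x) has_integral (2*pi^2)) BX"
proof -
  let ?I3 = "integral {0..2*pi} (\<lambda>x::real. cos x ^ 3)"
  let ?I21 = "integral {0..2*pi} (\<lambda>x::real. cos x ^ 2 * sin x)"
  have "((\<lambda>x. cos (fst x) ^ 3 * cos (snd x) - (cos (fst x) ^ 2 * sin (fst x)) * sin (snd x)
          + 2 * (cos (fst x) ^ 2 * cos (snd x) ^ 2) - 2 * ((cos (fst x) * sin (fst x)) * (cos (snd x) * sin (snd x)))
          + cos (fst x) * cos (snd x) ^ 3 - sin (fst x) * (cos (snd x) ^ 2 * sin (snd x)))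
        has_integral (?I3 * 0 - ?I21 * 0 + 2 * (pi * pi) - 2 * (0 * 0) + 0 * ?I3 - 0 * ?I21)) BX"
    by (intro has_integral_add has_integral_diff has_integral_mult_right
        SEPc[where f="\<lambda>x. cos x ^ 3" and g=cos] SEPc[where f="\<lambda>x. cos x ^ 2 * sin x" and g=sin]
        SEPc[where f="\<lambda>x. cos x ^ 2" and g="\<lambda>x. cos x ^ 2"]
        SEPc[where f="\<lambda>x. cos x * sin x" and g="\<lambda>x. cos x * sin x"]
        SEPc[where g="\<lambda>x. cos x ^ 3" and f=cos] SEPc[where g="\<lambda>x. cos x ^ 2 * sin x" and f=sin]
        cU I_cos I_sin I_cos2 I_cs Iany)
  then show ?thesis unfolding ca_def cb_def
    by (rule HI_eq) (simp_all add: algebra_simps power2_eq_square power3_eq_cube)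
qed


abbreviation "UU \<equiv> uniform_measure lborel {0..2*pi}"
abbreviation "MM \<equiv> UU \<Otimes>\<^sub>M UU"

lemma U_eq: "UU = density lborel (\<lambda>x. ennreal (indicator {0..2*pi} x / (2*pi)))"
  unfolding uniform_measure_def
  apply (rule density_cong)
  using divide_ennreal[of 1 "2*pi"] by (auto simp: indicator_def)

lemma M_eq: "MM = density lborel (\<lambda>x. ennreal (indicator (cbox (0,0) (2*pi,2*pi)) x / (4*pi^2)))"
proof -
  have "MM = density (lborel \<Otimes>\<^sub>M lborel) (\<lambda>(x,y). ennreal (indicator {0..2*pi} x / (2*pi)) * ennreal (indicator {0..2*pi} y / (2*pi)))"
    apply (simp only: U_eq)
    apply (rule pair_measure_density)
    apply simp
    apply simp
    apply (rule lborel.sigma_finite_measure_axioms)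
    apply (subst U_eq[symmetric])
    apply (rule prob_space_imp_sigma_finite)
    apply (rule prob_space_uniform_measure)
    apply auto
    done
  also have "\<dots> = density lborel (\<lambda>x. ennreal (indicator (cbox (0,0) (2*pi,2*pi)) x / (4*pi^2)))"
  proof -
    have "(\<lambda>(x,y). ennreal (indicator {0..2*pi} x / (2*pi)) * ennreal (indicator {0..2*pi} y / (2*pi)))
       = (\<lambda>x. ennreal (indicator (cbox (0,0) (2*pi,2*pi)) x / (4*pi^2)))"
      by (auto simp: fun_eq_iff indicator_def ennreal_mult'[symmetric] power2_eq_square cbox_Pair_eq)
    then show ?thesis unfolding lborel_prod by simp
  qed
  finally show ?thesis .
qed


lemma INT:
  fixes g :: "real \<times> real \<Rightarrow> real"
  assumes g: "continuous_on UNIV g"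
  shows "integrable MM g" "integral\<^sup>L MM g = integral BX g / (4*pi^2)"
proof -
  have gm: "g \<in> borel_measurable lborel" using borel_measurable_continuous_onI[OF g] by simp
  have dm: "(\<lambda>x. indicator BX x / (4*pi^2)) \<in> borel_measurable lborel" by simp
  have ib: "integrable lborel (\<lambda>x. indicator BX x *\<^sub>R g x)"
    by (rule borel_integrable_compact) (auto intro: continuous_on_subset[OF g])
  have eq: "(\<lambda>x. (indicator BX x / (4*pi^2)) *\<^sub>R g x) = (\<lambda>x. (1/(4*pi^2)) * (indicator BX x *\<^sub>R g x))"
    by (auto simp: fun_eq_iff)
  show "integrable MM g"
    unfolding M_eq
    apply (subst integrable_density[OF gm dm])
    apply simp
    unfolding eq using ib by simp
  have "integral\<^sup>L MM g = integral\<^sup>L lborel (\<lambda>x. (1/(4*pi^2)) * (indicator BX x *\<^sub>R g x))"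
    unfolding M_eq
    apply (subst integral_density[OF gm dm])
    apply simp
    unfolding eq ..
  also have "\<dots> = (1/(4*pi^2)) * (LINT x : BX | lborel. g x)"
    by (simp add: set_lebesgue_integral_def)
  also have "\<dots> = integral BX g / (4*pi^2)"
    using set_borel_integral_eq_integral(2)[of BX g] ib by (simp add: set_integrable_def)
  finally show "integral\<^sup>L MM g = integral BX g / (4*pi^2)" .
qed

lemma T2_meas: "T2_param \<in> measurable MM (borel \<Otimes>\<^sub>M borel)"
proof -
  have c: "continuous_on UNIV T2_param"
    unfolding T2_param_def case_prod_unfold by (intro continuous_intros)
  have "T2_param \<in> borel_measurable borel" by (rule borel_measurable_continuous_onI[OF c])
  moreover have "sets MM = sets (borel::(real\<times>real) measure)" by (simp only: M_eq sets_density sets_lborel)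
  moreover have "sets (borel \<Otimes>\<^sub>M borel :: (complex\<times>complex) measure) = sets (borel::(complex\<times>complex) measure)" by (simp only: borel_prod)
  ultimately show ?thesis using measurable_cong_sets by blast
qed

lemma PULL:
  fixes F :: "complex \<times> complex \<Rightarrow> real"
  assumes F: "continuous_on UNIV F"
  shows "integral\<^sup>L haar_T2 F = integral\<^sup>L MM (\<lambda>x. F (T2_param x))"
  unfolding haar_T2_def
  apply (rule integral_distr[OF T2_meas])
  unfolding borel_prod using borel_measurable_continuous_onI[OF F] .


lemma MI: "((\<lambda>x. Main4 q c e (ca x) (cb x) (cn x)) has_integral
   (4*pi^2 * e^4 * (q*c^2 + 4*c*q*(q-1) + 2*c*q*(q-1)*(q-2) + q*(q-1)*c^2))) BX"
proof -
  have "((\<lambda>x. (2*c*q*e^2) * cb x + (2*c*q*e^3) * ca x + (q*c^2*e^4) * 1 + (4*c*q*(q-1)*e^3) * (ca x * cb x)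
      + (4*c*q*(q-1)*e^4) * ca x ^ 2 + (2*c*q*(q-1)*e^4) * (cn x * cb x) + (4*c*q*(q-1)*(q-2)*e^4) * (ca x ^ 2 * cb x)
      + (2*q*(q-1)*c^2*e^4) * cb x ^ 2) has_integral
     ((2*c*q*e^2) * 0 + (2*c*q*e^3) * 0 + (q*c^2*e^4) * (4*pi^2) + (4*c*q*(q-1)*e^3) * 0
      + (4*c*q*(q-1)*e^4) * (4*pi^2) + (2*c*q*(q-1)*e^4) * 0 + (4*c*q*(q-1)*(q-2)*e^4) * (2*pi^2)
      + (2*q*(q-1)*c^2*e^4) * (2*pi^2))) BX"
    by (intro has_integral_add has_integral_mult_right L_b L_a L_1 L_ab L_a2 L_nb L_a2b L_b2)
  then show ?thesis
    by (rule HI_eq) (simp_all add: Main4_def algebra_simps)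
qed

lemma ALG1:
  fixes xc1 xs1 xc2 xs2 e cc :: real
  shows "xs1^2 + xc1^2 = 1 \<Longrightarrow> xs2^2 + xc2^2 = 1 \<Longrightarrow> (1 + e*(xc1+xc2) + (cc*e^2*xc1*xc2 - cc*e^2*xs1*xs2))^2 + (e*(xs1+xs2) + (cc*e^2*xc1*xs2 + cc*e^2*xs1*xc2))^2
   = 1 + 2*e*(xc1 + xc2) + e^2*(2 + 2*(xc1 * xc2 + xs1 * xs2)) + (2*cc*e^2*((xc1 * xc2 - xs1 * xs2) + e*(xc1 + xc2)) + cc^2*e^4)"
  by algebra
lemma ALG2:
  fixes xc1 xs1 xc2 xs2 :: real
  shows "xs1^2 + xc1^2 = 1 \<Longrightarrow> xs2^2 + xc2^2 = 1 \<Longrightarrow> (1 + xc1 + xc2 - (xc1 * xc2 - xs1 * xs2))^2 + (xs1 + xs2 - (xc1 * xs2 + xs1 * xc2))^2 = 4 + 4 * xs1 * xs2"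
  by algebra
lemma TRIG:
  fixes s t e cc :: real
  shows "cmod (1 + of_real e * (cis s + cis t) + of_real (cc * e^2) * cis s * cis t) ^ 2
    = 1 + 2*e*(cos s + cos t) + e^2*(2 + 2*(cos s * cos t + sin s * sin t))
      + (2*cc*e^2*((cos s * cos t - sin s * sin t) + e*(cos s + cos t)) + cc^2*e^4)"
  using ALG1[of "sin s" "cos s" "sin t" "cos t" e cc] by (simp add: cis.ctr cmod_power2)
lemma TRIG1:
  fixes s t :: real
  shows "cmod (1 + cis s + cis t - cis s * cis t) ^ 2 = 4 + 4 * sin s * sin t"
  using ALG2[of "sin s" "cos s" "sin t" "cos t"] by (simp add: cis.ctr cmod_power2)

lemma TRIG0:
  fixes s t e :: real
  shows "cmod (1 + of_real e * (cis s + cis t)) ^ 2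
    = 1 + 2*e*(cos s + cos t) + e^2*(2 + 2*(cos s * cos t + sin s * sin t))"
  using TRIG[of e s t 0] by simp

lemma POW2: "0 \<le> (y::real) \<Longrightarrow> y powr p = (y^2) powr (p/2)"
proof (cases "y = 0")
  case False
  assume "0 \<le> y"
  then have "y > 0" using False by simp
  then have "(y^2) powr (p/2) = (y powr 2) powr (p/2)" by (simp add: powr_realpow)
  also have "\<dots> = y powr p" by (simp add: powr_powr)
  finally show ?thesis by simp
qed simp

lemma T2_cont: "continuous_on UNIV T2_param"
  unfolding T2_param_def case_prod_unfold by (intro continuous_intros)

lemma T2_eq: "T2_param x = (cis (fst x), cis (snd x))"
  unfolding T2_param_def case_prod_unfold by simp

lemma cont_pow:
  fixes f :: "complex \<times> complex \<Rightarrow> complex"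
  assumes "continuous_on UNIV f" "p > 0"
  shows "continuous_on UNIV (\<lambda>z. cmod (f z) powr p)"
  by (rule continuous_on_powr') (use assms in \<open>auto intro: continuous_intros\<close>)

lemma HAAR_BX:
  fixes F :: "complex \<times> complex \<Rightarrow> real"
  assumes F: "continuous_on UNIV F"
  shows "integral\<^sup>L haar_T2 F = integral BX (\<lambda>x. F (T2_param x)) / (4*pi^2)"
    and "continuous_on UNIV (\<lambda>x. F (T2_param x))"
proof -
  show c: "continuous_on UNIV (\<lambda>x. F (T2_param x))"
    by (rule continuous_on_compose2[OF F T2_cont]) auto
  show "integral\<^sup>L haar_T2 F = integral BX (\<lambda>x. F (T2_param x)) / (4*pi^2)"
    using PULL[OF F] INT(2)[OF c] by simp
qed

lemma ca_b: "\<bar>ca x\<bar> \<le> 2"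
proof -
  have "\<bar>cos (fst x)\<bar> \<le> 1" "\<bar>cos (snd x)\<bar> \<le> 1" by (simp_all add: abs_cos_le_one)
  then show ?thesis unfolding ca_def by linarith
qed
lemma cb_b: "\<bar>cb x\<bar> \<le> 1"
proof -
  have "cb x = cos (fst x + snd x)" unfolding cb_def by (simp add: cos_add)
  then show ?thesis by (simp add: abs_cos_le_one)
qed
lemma cn_b: "\<bar>cn x\<bar> \<le> 4"
proof -
  have "cn x = 2 + 2 * cos (fst x - snd x)" unfolding cn_def by (simp add: cos_diff)
  moreover have "\<bar>cos (fst x - snd x)\<bar> \<le> 1" by (rule abs_cos_le_one)
  ultimately show ?thesis by linarith
qed

lemma PTc:
  fixes p e :: real
  shows "cmod ((\<lambda>(z1, z2). 1 + of_real e * (z1 + z2) + of_real ((1 - p/2) * e^2) * z1 * z2) (T2_param x)) powr p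
   = (1 + 2*e*ca x + e^2*cn x + (2*(1 - p/2)*e^2*(cb x + e*ca x) + (1 - p/2)^2*e^4)) powr (p/2)"
  apply (subst POW2[OF norm_ge_zero])
  apply (simp only: T2_eq prod.case TRIG ca_def cb_def cn_def)
  done

lemma PT0:
  fixes p e :: real
  shows "cmod ((\<lambda>(z1, z2). 1 + of_real e * (z1 + z2)) (T2_param x)) powr p
   = (1 + 2*e*ca x + e^2*cn x) powr (p/2)"
  apply (subst POW2[OF norm_ge_zero])
  apply (simp only: T2_eq prod.case TRIG0 ca_def cb_def cn_def)
  done

lemma fc_cont: "continuous_on UNIV (\<lambda>z::complex\<times>complex. (\<lambda>(z1, z2). 1 + of_real e * (z1 + z2) + of_real ((1 - p/2) * e^2) * z1 * z2) z)"
  unfolding case_prod_unfold by (intro continuous_intros)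
lemma f0_cont: "continuous_on UNIV (\<lambda>z::complex\<times>complex. (\<lambda>(z1, z2). 1 + of_real e * (z1 + z2)) z)"
  unfolding case_prod_unfold by (intro continuous_intros)

lemma LP_core:
  fixes p :: real
  assumes p1: "1 \<le> p" and p2: "p \<noteq> 2"
  shows "\<exists>d>0. \<forall>e. 0 < e \<longrightarrow> e < d \<longrightarrow>
    integral BX (\<lambda>x. (1 + 2*e*ca x + e^2*cn x + (2*(1 - p/2)*e^2*(cb x + e*ca x) + (1 - p/2)^2*e^4)) powr (p/2))
    < integral BX (\<lambda>x. (1 + 2*e*ca x + e^2*cn x) powr (p/2))"
proof -
  define q where "q = p/2"
  define c where "c = 1 - q"
  have qc: "q^2*c^2 > 0" unfolding q_def c_def using p1 p2 by simp
  obtain K0 e1 where e1: "0 < e1" and PWh: "\<forall>e a b n. 0 < e \<longrightarrow> e \<le> e1 \<longrightarrow> \<bar>a\<bar> \<le> 2 \<longrightarrow> \<bar>b\<bar> \<le> 1 \<longrightarrow> \<bar>n\<bar> \<le> 4 \<longrightarrow>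
     (1 + 2*e*a + e^2*n + (2*c*e^2*(b + e*a) + c^2*e^4)) powr q - (1 + 2*e*a + e^2*n) powr q
       \<le> Main4 q c e a b n + K0 * e^5"
    using PW[where q=q and c=c] by (elim exE conjE) (rule that; assumption)
  define K where "K = max K0 1"
  have K1: "K \<ge> 1" "K0 \<le> K" unfolding K_def by auto
  define d where "d = min e1 (q^2*c^2/K)"
  have dp: "d > 0" unfolding d_def using e1 qc K1 by simp
  have "integral BX (\<lambda>x. (1 + 2*e*ca x + e^2*cn x + (2*c*e^2*(cb x + e*ca x) + c^2*e^4)) powr q)
    < integral BX (\<lambda>x. (1 + 2*e*ca x + e^2*cn x) powr q)" if e: "0 < e" "e < d" for e
  proof -
    define Gc where "Gc = (\<lambda>x. (1 + 2*e*ca x + e^2*cn x + (2*c*e^2*(cb x + e*ca x) + c^2*e^4)) powr q)"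
    define G0 where "G0 = (\<lambda>x. (1 + 2*e*ca x + e^2*cn x) powr q)"
    define Mf where "Mf = (\<lambda>x. Main4 q c e (ca x) (cb x) (cn x) + K * e^5)"
    have pw: "Gc x - G0 x \<le> Mf x" for x
    proof -
      have ee1: "e \<le> e1" using e unfolding d_def by simp
      have "Gc x - G0 x \<le> Main4 q c e (ca x) (cb x) (cn x) + K0 * e^5"
        unfolding Gc_def G0_def using PWh[rule_format, OF e(1) ee1 ca_b cb_b cn_b] .
      also have "\<dots> \<le> Mf x" unfolding Mf_def using K1 e by (simp add: mult_right_mono)
      finally show ?thesis .
    qed
    have cGc: "continuous_on UNIV Gc"
    proof -
      have eqG: "Gc = (\<lambda>x. cmod ((\<lambda>(z1, z2). 1 + of_real e * (z1 + z2) + of_real ((1 - p/2) * e^2) * z1 * z2) (T2_param x)) powr p)"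
        unfolding Gc_def q_def c_def by (rule ext, rule PTc[symmetric])
      have "continuous_on UNIV (\<lambda>x. cmod ((\<lambda>(z1, z2). 1 + of_real e * (z1 + z2) + of_real ((1 - p/2) * e^2) * z1 * z2) (T2_param x)) powr p)"
        by (rule HAAR_BX(2)[OF cont_pow[OF fc_cont]]) (use p1 in simp)
      then show ?thesis unfolding eqG .
    qed
    have cG0: "continuous_on UNIV G0"
    proof -
      have eqG: "G0 = (\<lambda>x. cmod ((\<lambda>(z1, z2). 1 + of_real e * (z1 + z2)) (T2_param x)) powr p)"
        unfolding G0_def q_def c_def by (rule ext, rule PT0[symmetric])
      have "continuous_on UNIV (\<lambda>x. cmod ((\<lambda>(z1, z2). 1 + of_real e * (z1 + z2)) (T2_param x)) powr p)"
        by (rule HAAR_BX(2)[OF cont_pow[OF f0_cont]]) (use p1 in simp)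
      then show ?thesis unfolding eqG .
    qed
    have iGc: "Gc integrable_on BX" by (rule integrable_continuous) (rule continuous_on_subset[OF cGc], simp)
    have iG0: "G0 integrable_on BX" by (rule integrable_continuous) (rule continuous_on_subset[OF cG0], simp)
    define V where "V = 4*pi^2 * e^4 * (q*c^2 + 4*c*q*(q-1) + 2*c*q*(q-1)*(q-2) + q*(q-1)*c^2) + (K*e^5) * (4*pi^2)"
    have hM: "(Mf has_integral V) BX"
    proof -
      have "((\<lambda>x. Main4 q c e (ca x) (cb x) (cn x) + (K*e^5) * 1) has_integral V) BX"
        unfolding V_def by (intro has_integral_add has_integral_mult_right MI L_1)
      then show ?thesis by (rule HI_eq) (simp_all add: Mf_def)
    qed
    have "integral BX Gc - integral BX G0 = integral BX (\<lambda>x. Gc x - G0 x)"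
      by (rule integral_diff[OF iGc iG0, symmetric])
    also have "\<dots> \<le> integral BX Mf"
      by (rule integral_le[OF integrable_diff[OF iGc iG0] has_integral_integrable[OF hM]], rule pw)
    also have "\<dots> = V" using hM by (rule integral_unique)
    also have "V = 4*pi^2 * e^4 * (K*e - q^2*c^2)"
      unfolding V_def c_def by (simp add: algebra_simps power2_eq_square eval_nat_numeral)
    also have "\<dots> < 0"
    proof -
      have "e < q^2*c^2/K" using e unfolding d_def by simp
      then have "K*e < q^2*c^2" using K1 by (simp add: field_simps)
      then show ?thesis using e by (simp add: mult_pos_neg)
    qed
    finally show ?thesis unfolding Gc_def G0_def by simp
  qed
  then show ?thesis unfolding q_def c_def using dp by blast
qed


lemma LP_main:
  fixes p :: real
  assumes p1: "1 \<le> p" and p2: "p \<noteq> 2"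
  shows "\<forall>\<^sub>F \<epsilon> in at_right (0::real).
            Lp_norm_T2 p (\<lambda>(z1, z2). 1 + of_real \<epsilon> * (z1 + z2)
                                  + of_real ((1 - p/2) * \<epsilon>\<^sup>2) * z1 * z2)
          < Lp_norm_T2 p (\<lambda>(z1, z2). 1 + of_real \<epsilon> * (z1 + z2))"
proof -
  obtain d where dp: "d > 0" and dH: "\<forall>e. 0 < e \<longrightarrow> e < d \<longrightarrow>
    integral BX (\<lambda>x. (1 + 2*e*ca x + e^2*cn x + (2*(1 - p/2)*e^2*(cb x + e*ca x) + (1 - p/2)^2*e^4)) powr (p/2))
    < integral BX (\<lambda>x. (1 + 2*e*ca x + e^2*cn x) powr (p/2))"
    using LP_core[OF p1 p2] by (elim exE conjE) (rule that; assumption)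
  have pp: "p > 0" using p1 by simp
  show ?thesis unfolding eventually_at_right_field
  proof (intro exI[of _ d] conjI allI impI)
    show "0 < d" by (rule dp)
    fix e :: real assume e: "0 < e" "e < d"
    define fc where "fc = (\<lambda>(z1, z2). 1 + of_real e * (z1 + z2) + of_real ((1 - p/2) * e\<^sup>2) * (z1::complex) * z2)"
    define f0 where "f0 = (\<lambda>(z1, z2). 1 + of_real e * (z1 + (z2::complex)))"
    have Ic: "(\<integral>z. cmod (fc z) powr p \<partial>haar_T2) = integral BX (\<lambda>x. (1 + 2*e*ca x + e^2*cn x + (2*(1 - p/2)*e^2*(cb x + e*ca x) + (1 - p/2)^2*e^4)) powr (p/2)) / (4*pi^2)"
      unfolding fc_def HAAR_BX(1)[OF cont_pow[OF fc_cont pp]] PTc ..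
    have I0: "(\<integral>z. cmod (f0 z) powr p \<partial>haar_T2) = integral BX (\<lambda>x. (1 + 2*e*ca x + e^2*cn x) powr (p/2)) / (4*pi^2)"
      unfolding f0_def HAAR_BX(1)[OF cont_pow[OF f0_cont pp]] PT0 ..
    have lt: "(\<integral>z. cmod (fc z) powr p \<partial>haar_T2) < (\<integral>z. cmod (f0 z) powr p \<partial>haar_T2)"
      unfolding Ic I0 using dH e by (simp add: divide_strict_right_mono)
    have nn: "0 \<le> (\<integral>z. cmod (fc z) powr p \<partial>haar_T2)"
      by (rule integral_nonneg_AE) simp
    have "Lp_norm_T2 p fc < Lp_norm_T2 p f0"
      unfolding Lp_norm_T2_def by (rule powr_less_mono2) (use pp nn lt in auto)
    then show "Lp_norm_T2 p (\<lambda>(z1, z2). 1 + of_real e * (z1 + z2) + of_real ((1 - p/2) * e\<^sup>2) * z1 * z2)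
          < Lp_norm_T2 p (\<lambda>(z1, z2). 1 + of_real e * (z1 + z2))"
      unfolding fc_def f0_def .
  qed
qed

lemma haar_sets: "sets haar_T2 = sets (borel :: (complex \<times> complex) measure)"
proof -
  have "sets haar_T2 = sets (borel \<Otimes>\<^sub>M borel :: (complex \<times> complex) measure)"
    unfolding haar_T2_def by simp
  also have "\<dots> = sets (borel :: (complex \<times> complex) measure)" by (simp only: borel_prod)
  finally show ?thesis .
qed

lemma meas_haar:
  fixes F :: "complex \<times> complex \<Rightarrow> real"
  assumes "continuous_on UNIV F"
  shows "(\<lambda>z. ereal (F z)) \<in> borel_measurable haar_T2"
proof -
  have "F \<in> borel_measurable borel" by (rule borel_measurable_continuous_onI[OF assms])
  then have "(\<lambda>z. ereal (F z)) \<in> borel_measurable borel" by measurable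
  then show ?thesis using measurable_cong_sets[OF haar_sets refl] by blast
qed

lemma AE_haar:
  fixes F :: "complex \<times> complex \<Rightarrow> real"
  assumes "continuous_on UNIV F"
  shows "(AE z in haar_T2. F z \<le> c) \<longleftrightarrow> (AE x in MM. F (T2_param x) \<le> c)"
proof -
  have Fm: "F \<in> borel_measurable (borel \<Otimes>\<^sub>M borel)"
    unfolding borel_prod by (rule borel_measurable_continuous_onI[OF assms])
  have "{x \<in> space (borel \<Otimes>\<^sub>M borel). F x \<le> c} \<in> sets (borel \<Otimes>\<^sub>M borel :: (complex \<times> complex) measure)"
    using Fm by measurable
  then show ?thesis unfolding haar_T2_def by (rule AE_distr_iff[OF T2_meas])
qed

lemma g1_cont: "continuous_on UNIV (\<lambda>z::complex\<times>complex. cmod ((\<lambda>(z1, z2). 1 + z1 + z2 - z1 * z2) z))"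
  unfolding case_prod_unfold by (intro continuous_intros)
lemma g2_cont: "continuous_on UNIV (\<lambda>z::complex\<times>complex. cmod ((\<lambda>(z1, z2). 1 + z1 + z2) z))"
  unfolding case_prod_unfold by (intro continuous_intros)

lemma LINF_up: "Linf_norm_T2 (\<lambda>(z1, z2). 1 + z1 + z2 - z1 * z2) \<le> ereal (29/10)"
  unfolding Linf_norm_T2_def
proof (rule esssup_I)
  show "(\<lambda>z. ereal (cmod ((\<lambda>(z1, z2). 1 + z1 + z2 - z1 * z2) z))) \<in> borel_measurable haar_T2"
    by (rule meas_haar[OF g1_cont])
  have "AE x in MM. cmod ((\<lambda>(z1, z2). 1 + z1 + z2 - z1 * z2) (T2_param x)) \<le> 29/10"
  proof (rule AE_I2)
    fix x :: "real \<times> real"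
    have sq: "cmod ((\<lambda>(z1, z2). 1 + z1 + z2 - z1 * z2) (T2_param x)) ^ 2 = 4 + 4 * sin (fst x) * sin (snd x)"
      by (simp only: T2_eq prod.case TRIG1)
    have "sin (fst x) * sin (snd x) \<le> 1"
    proof -
      have "\<bar>sin (fst x) * sin (snd x)\<bar> \<le> 1 * 1" unfolding abs_mult
        by (intro mult_mono) (simp_all add: abs_sin_le_one)
      then show ?thesis by simp
    qed
    then have "cmod ((\<lambda>(z1, z2). 1 + z1 + z2 - z1 * z2) (T2_param x)) ^ 2 \<le> (29/10)^2"
      unfolding sq by (simp add: power2_eq_square)
    then show "cmod ((\<lambda>(z1, z2). 1 + z1 + z2 - z1 * z2) (T2_param x)) \<le> 29/10"
      by (rule power2_le_imp_le) simp
  qed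
  then have "AE z in haar_T2. cmod ((\<lambda>(z1, z2). 1 + z1 + z2 - z1 * z2) z) \<le> 29/10"
    using AE_haar[OF g1_cont] by blast
  then show "AE z in haar_T2. ereal (cmod ((\<lambda>(z1, z2). 1 + z1 + z2 - z1 * z2) z)) \<le> ereal (29/10)"
    by simp
qed

lemma COSB: "0 \<le> s \<Longrightarrow> s \<le> 1/4 \<Longrightarrow> 31/32 \<le> cos (s::real)"
proof -
  assume s: "0 \<le> s" "s \<le> 1/4"
  have c: "cos s = 1 - 2 * sin (s/2) ^ 2" using cos_double_sin[of "s/2"] by simp
  have "\<bar>sin (s/2)\<bar> \<le> 1/8" using abs_sin_x_le_abs_x[of "s/2"] s by simp
  then have "\<bar>sin (s/2)\<bar> ^ 2 \<le> (1/8) ^ 2" by (rule power_mono) simp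
  then have "sin (s/2) ^ 2 \<le> 1/64" by (simp add: power2_eq_square)
  then show ?thesis unfolding c by simp
qed

lemma UU_sf: "sigma_finite_measure UU"
  by (rule prob_space_imp_sigma_finite, rule prob_space_uniform_measure) auto

lemma MM_pos: "emeasure MM ({0..1/4} \<times> {0..1/4}) > 0"
proof -
  have e1: "emeasure UU {0..1/4} = ennreal (1/4) / ennreal (2*pi)"
  proof -
    have "{0..2*pi} \<inter> {0..1/4} = {0..(1/4::real)}" using pi_gt3 by auto
    then show ?thesis by (simp add: emeasure_uniform_measure)
  qed
  have e2: "emeasure UU {0..1/4} > 0" unfolding e1
    using divide_ennreal[of "1/4" "2*pi"] by (simp add: pi_gt_zero)
  have "emeasure MM ({0..1/4} \<times> {0..1/4}) = emeasure UU {0..1/4} * emeasure UU {0..1/4}"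
    by (rule sigma_finite_measure.emeasure_pair_measure_Times[OF UU_sf]) auto
  then show ?thesis using e2 by (simp add: ennreal_zero_less_mult_iff)
qed

lemma LINF_low: "ereal (29/10) < Linf_norm_T2 (\<lambda>(z1, z2). 1 + z1 + z2)"
proof (rule ccontr)
  define G where "G = (\<lambda>z::complex\<times>complex. cmod ((\<lambda>(z1, z2). 1 + z1 + z2) z))"
  have Gc: "continuous_on UNIV G" unfolding G_def by (rule g2_cont)
  assume "\<not> ereal (29/10) < Linf_norm_T2 (\<lambda>(z1, z2). 1 + z1 + z2)"
  then have le: "esssup haar_T2 (\<lambda>z. ereal (G z)) \<le> ereal (29/10)"
    unfolding Linf_norm_T2_def G_def by simp
  have "AE z in haar_T2. ereal (G z) \<le> ereal (29/10)"
    using esssup_AE[of "\<lambda>z. ereal (G z)" haar_T2] by (rule eventually_mono) (rule order_trans[OF _ le])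
  then have "AE z in haar_T2. G z \<le> 29/10" by simp
  then have ae: "AE x in MM. G (T2_param x) \<le> 29/10" using AE_haar[OF Gc] by blast
  have cGT: "continuous_on UNIV (\<lambda>x. G (T2_param x))" by (rule HAAR_BX(2)[OF Gc])
  have setm: "{x \<in> space MM. \<not> G (T2_param x) \<le> 29/10} \<in> sets MM"
  proof -
    have "(\<lambda>x. G (T2_param x)) \<in> borel_measurable borel" by (rule borel_measurable_continuous_onI[OF cGT])
    then have "(\<lambda>x. G (T2_param x)) \<in> borel_measurable MM"
      using measurable_cong_sets[of MM borel] by (simp add: M_eq)
    then show ?thesis by measurable
  qed
  have z: "emeasure MM {x \<in> space MM. \<not> G (T2_param x) \<le> 29/10} = 0"
    using ae AE_iff_measurable[OF setm refl] by blast
  have sub: "{0..1/4} \<times> {0..1/4} \<subseteq> {x \<in> space MM. \<not> G (T2_param x) \<le> 29/10}"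
  proof
    fix x :: "real \<times> real" assume x: "x \<in> {0..1/4} \<times> {0..1/4}"
    have x1: "0 \<le> fst x" "fst x \<le> 1/4" "0 \<le> snd x" "snd x \<le> 1/4" using x by (auto simp: mem_Times_iff)
    have c1: "31/32 \<le> cos (fst x)" "31/32 \<le> cos (snd x)" using COSB[OF x1(1,2)] COSB[OF x1(3,4)] by auto
    have "Re (1 + cis (fst x) + cis (snd x)) \<le> G (T2_param x)"
      unfolding G_def T2_eq prod.case by (rule complex_Re_le_cmod)
    moreover have "Re (1 + cis (fst x) + cis (snd x)) = 1 + cos (fst x) + cos (snd x)" by simp
    ultimately have "29/10 < G (T2_param x)" using c1 by linarith
    then show "x \<in> {x \<in> space MM. \<not> G (T2_param x) \<le> 29/10}" by (simp add: M_eq)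
  qed
  have "emeasure MM ({0..1/4} \<times> {0..1/4}) \<le> emeasure MM {x \<in> space MM. \<not> G (T2_param x) \<le> 29/10}"
    by (rule emeasure_mono[OF sub setm])
  then show False using z MM_pos by simp
qed

theorem lemma2p2:
  fixes p :: real
  assumes "1 \<le> p" and "p \<noteq> 2"
  shows "(\<forall>\<^sub>F \<epsilon> in at_right (0::real).
            Lp_norm_T2 p (\<lambda>(z1, z2). 1 + of_real \<epsilon> * (z1 + z2)
                                  + of_real ((1 - p/2) * \<epsilon>\<^sup>2) * z1 * z2)
          < Lp_norm_T2 p (\<lambda>(z1, z2). 1 + of_real \<epsilon> * (z1 + z2)))
       \<and> Linf_norm_T2 (\<lambda>(z1, z2). 1 + z1 + z2 - z1 * z2)
          < Linf_norm_T2 (\<lambda>(z1, z2). 1 + z1 + z2)"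
  using LP_main[OF assms] LINF_up LINF_low by (auto intro: order_le_less_trans)

end
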